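(* Fix $\tilde\mu:\mathcal X\times\{0,1\}\to[0,1]$, $\tilde e:\mathcal X\to[\bar e,1-\bar e]$ for some $\bar e>0$, and measurable $\tilde\eta_1,\dots,\tilde\eta_m:\mathcal X\to\mathbb R$, such that $\tilde\mu=\mu$ or $\tilde e=e$. Let $\kappa_\ell=1$ if $\tilde\eta_\ell=\eta_\ell$ and $\kappa_\ell=0$ otherwise. Then, writing $\Lambda=E_P[\phi^\rho_{g_0,\dots,g_m}(X,A,Y;\tilde e,\tilde\mu,\tilde\eta_1,\dots,\tilde\eta_m)]$: (i) if $\kappa_1=\dots=\kappa_m=1$, then $\Lambda=\mathrm{AHE}^\rho_{g_0,\dots,g_m}$; (ii) if $\rho_\ell=+1$ whenever $\kappa_\ell=0$, then $\Lambda\ge\mathrm{AHE}^\rho_{g_0,\dots,g_m}$; (iii) if $\rho_\ell=-1$ whenever $\kappa_\ell=0$, then $\Lambda\le\mathrm{AHE}^\rho_{g_0,\dots,g_m}$.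
   Context: Observed data $(X,A,Y)\sim P$ on $\mathcal X\times\{0,1\}\times\{0,1\}$; $e(x)=P(A=1\mid X=x)\in[\bar e,1-\bar e]$, $\mu(x,a)=E_P[Y\mid X=x,A=a]$. Fix $m\in\mathbb N$, $\rho\in\{-1,+1\}^m$, measurable $g_\ell=(g_\ell^{(0)},g_\ell^{(1)},g_\ell^{(2)}):\mathcal X\to[-1,1]^3$, $\ell=0,\dots,m$; $\eta_\ell(x)=g_\ell^{(0)}(x)\mu(x,0)+g_\ell^{(1)}(x)\mu(x,1)+g_\ell^{(2)}(x)$; $$\mathrm{AHE}^\rho_{g_0,\dots,g_m}=E_P\Big[g_0^{(0)}(X)\mu(X,0)+g_0^{(1)}(X)\mu(X,1)+g_0^{(2)}(X)+\sum_{\ell=1}^m\rho_\ell\min\{0,\eta_\ell(X)\}\Big].$$ For nuisances $\check e,\check\mu,\check\eta_\ell$, with $\check\zeta^{(a)}(X)=g_0^{(a)}(X)+\sum_{\ell=1}^m\rho_\ell\mathbb 1\{\check\eta_\ell(X)\le0\}g_\ell^{(a)}(X)$ ($a=0,1,2$), $$\phi^\rho_{g_0,\dots,g_m}(X,A,Y;\check e,\check\mu,\check\eta_1,\dots,\check\eta_m)=\check\zeta^{(2)}(X)+\check\zeta^{(0)}(X)\frac{(A-\check e(X))\check\mu(X,0)+(1-A)Y}{1-\check e(X)}+\check\zeta^{(1)}(X)\frac{(\check e(X)-A)\check\mu(X,1)+AY}{\check e(X)}.$$ *)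

theory Defs
  imports "HOL-Analysis.Analysis" "HOL-Probability.Probability"
begin

text \<open>Conventions. Observations are triples (x, a, y) with a, y :: bool
(False = 0, True = 1).  g l c x stands for g_l^(c)(x), c = 0,1,2.
mu x False = mu(x,0), mu x True = mu(x,1).  rho l :: real is rho_l.\<close>

definition eta :: "(nat \<Rightarrow> nat \<Rightarrow> 'x \<Rightarrow> real) \<Rightarrow> ('x \<Rightarrow> bool \<Rightarrow> real) \<Rightarrow> nat \<Rightarrow> 'x \<Rightarrow> real" where
  "eta g mu l x = g l 0 x * mu x False + g l 1 x * mu x True + g l 2 x"

definition zeta :: "nat \<Rightarrow> (nat \<Rightarrow> real) \<Rightarrow> (nat \<Rightarrow> nat \<Rightarrow> 'x \<Rightarrow> real)
    \<Rightarrow> (nat \<Rightarrow> 'x \<Rightarrow> real) \<Rightarrow> nat \<Rightarrow> 'x \<Rightarrow> real" where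
  "zeta m rho g etac c x = g 0 c x + (\<Sum>l=1..m. rho l * of_bool (etac l x \<le> 0) * g l c x)"

definition phi :: "nat \<Rightarrow> (nat \<Rightarrow> real) \<Rightarrow> (nat \<Rightarrow> nat \<Rightarrow> 'x \<Rightarrow> real)
    \<Rightarrow> ('x \<Rightarrow> real) \<Rightarrow> ('x \<Rightarrow> bool \<Rightarrow> real) \<Rightarrow> (nat \<Rightarrow> 'x \<Rightarrow> real)
    \<Rightarrow> 'x \<times> bool \<times> bool \<Rightarrow> real" where
  "phi m rho g ec muc etac = (\<lambda>(x, a, y).
     zeta m rho g etac 2 x
     + zeta m rho g etac 0 x * (((of_bool a - ec x) * muc x False + (1 - of_bool a) * of_bool y) / (1 - ec x))
     + zeta m rho g etac 1 x * (((ec x - of_bool a) * muc x True + of_bool a * of_bool y) / ec x))"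

definition AHE :: "('x \<times> bool \<times> bool) measure \<Rightarrow> nat \<Rightarrow> (nat \<Rightarrow> real)
    \<Rightarrow> (nat \<Rightarrow> nat \<Rightarrow> 'x \<Rightarrow> real) \<Rightarrow> ('x \<Rightarrow> bool \<Rightarrow> real) \<Rightarrow> real" where
  "AHE P m rho g mu = (\<integral>(x, a, y). g 0 0 x * mu x False + g 0 1 x * mu x True + g 0 2 x
       + (\<Sum>l=1..m. rho l * min 0 (eta g mu l x)) \<partial>P)"

end

theory Submission imports Defs begin

lemma ce_ext:
  fixes P :: "('x \<times> 'b) measure" and MX :: "'x measure" and f k :: "'x \<times> 'b \<Rightarrow> real" and h :: "'x \<Rightarrow> real"
  assumes P: "finite_measure P"
    and X: "fst \<in> measurable P MX"
    and fm: "f \<in> borel_measurable P" and km: "k \<in> borel_measurable P"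
    and fnn: "\<And>z. z \<in> space P \<Longrightarrow> 0 \<le> f z \<and> f z \<le> C"
    and knn: "\<And>z. z \<in> space P \<Longrightarrow> 0 \<le> k z \<and> k z \<le> C"
    and hyp: "\<And>B. B \<in> sets MX \<Longrightarrow> (\<integral>z. indicator B (fst z) * f z \<partial>P) = (\<integral>z. indicator B (fst z) * k z \<partial>P)"
    and h: "h \<in> borel_measurable MX"
  shows "(\<integral>z. h (fst z) * f z \<partial>P) = (\<integral>z. h (fst z) * k z \<partial>P)"
proof -
  interpret finite_measure P by fact
  have eqm: "distr (density P f) MX fst = distr (density P k) MX fst"
  proof (rule measure_eqI)
    show "sets (distr (density P f) MX fst) = sets (distr (density P k) MX fst)" by simp
  next
    fix B assume "B \<in> sets (distr (density P f) MX fst)"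
    then have B: "B \<in> sets MX" by simp
    have pre: "fst -` B \<inter> space P \<in> sets P" using X B by (rule measurable_sets)
    have gen: "emeasure (distr (density P q) MX fst) B = ennreal (\<integral>z. indicator B (fst z) * q z \<partial>P)"
      if qm: "q \<in> borel_measurable P" and qb: "\<And>z. z \<in> space P \<Longrightarrow> 0 \<le> q z \<and> q z \<le> C" for q
    proof -
      have mX: "fst \<in> measurable (density P q) MX" using X by simp
      have "emeasure (distr (density P q) MX fst) B = emeasure (density P q) (fst -` B \<inter> space P)"
        using mX B by (simp add: emeasure_distr)
      also have "\<dots> = (\<integral>\<^sup>+ z. ennreal (q z) * indicator (fst -` B \<inter> space P) z \<partial>P)"
        using qm pre by (simp add: emeasure_density)
      also have "\<dots> = (\<integral>\<^sup>+ z. ennreal (indicator B (fst z) * q z) \<partial>P)"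
        by (rule nn_integral_cong) (auto simp: indicator_def)
      also have "\<dots> = ennreal (\<integral>z. indicator B (fst z) * q z \<partial>P)"
      proof (rule nn_integral_eq_integral)
        have mm: "(\<lambda>z. indicator B (fst z) * q z) \<in> borel_measurable P"
          using X B qm by (intro borel_measurable_times borel_measurable_indicator' ) auto
        show "integrable P (\<lambda>z. indicator B (fst z) * q z)"
        proof (rule integrable_const_bound[where B=C])
          show "AE z in P. norm (indicator B (fst z) * q z) \<le> C"
          proof (rule AE_I2)
            fix z assume "z \<in> space P" then show "norm (indicator B (fst z) * q z) \<le> C"
              using qb[of z] by (auto simp: indicator_def)
          qed
        qed (rule mm)
        show "AE z in P. 0 \<le> indicator B (fst z) * q z" using qb by (auto intro!: AE_I2)
      qed
      finally show ?thesis .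
    qed
    show "emeasure (distr (density P f) MX fst) B = emeasure (distr (density P k) MX fst) B"
      using gen[OF fm fnn] gen[OF km knn] hyp[OF B] by simp
  qed
  have gen2: "(\<integral>z. h (fst z) * q z \<partial>P) = integral\<^sup>L (distr (density P q) MX fst) h"
    if qm: "q \<in> borel_measurable P" and qb: "\<And>z. z \<in> space P \<Longrightarrow> 0 \<le> q z \<and> q z \<le> C" for q
  proof -
    have mX: "fst \<in> measurable (density P q) MX" using X by simp
    have "integral\<^sup>L (distr (density P q) MX fst) h = integral\<^sup>L (density P q) (\<lambda>z. h (fst z))"
      using mX h by (rule integral_distr)
    also have "\<dots> = (\<integral>z. q z *\<^sub>R h (fst z) \<partial>P)"
      using X h qm qb by (intro integral_density) (auto intro!: AE_I2)
    finally show ?thesis by (simp add: mult.commute)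
  qed
  show ?thesis using gen2[OF fm fnn] gen2[OF km knn] eqm by simp
qed

lemma aux: "(D::real) \<noteq> 0 \<Longrightarrow> N = D * u + R \<Longrightarrow> z * (N / D) = z * u + z / D * R"
  by (simp add: field_simps)

lemma alg:
  fixes E :: real
  assumes "E \<noteq> 0" "1 - E \<noteq> 0"
  shows "z2 + z0 * (((A - E) * m0 + (1 - A) * Y) / (1 - E)) + z1 * (((E - A) * m1 + A * Y) / E)
    = (z2 + z0 * u0 + z1 * u1) + z0 / (1 - E) * ((1 - A) * (Y - u0)) + z1 / E * (A * (Y - u1))
      + (z0 / (1 - E) * (m0 - u0) - z1 / E * (m1 - u1)) * (A - E)"
proof -
  have a0: "z0 * (((A - E) * m0 + (1 - A) * Y) / (1 - E)) = z0 * u0 + z0 / (1 - E) * ((1 - A) * (Y - u0) + (A - E) * (m0 - u0))"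
    by (rule aux[OF assms(2)]) (simp add: algebra_simps)
  have a1: "z1 * (((E - A) * m1 + A * Y) / E) = z1 * u1 + z1 / E * (A * (Y - u1) + (E - A) * (m1 - u1))"
    by (rule aux[OF assms(1)]) (simp add: algebra_simps)
  have r: "\<And>p q :: real. z2 + (z0 * u0 + p * ((1 - A) * (Y - u0) + (A - E) * (m0 - u0))) + (z1 * u1 + q * (A * (Y - u1) + (E - A) * (m1 - u1)))
     = (z2 + z0 * u0 + z1 * u1) + p * ((1 - A) * (Y - u0)) + q * (A * (Y - u1)) + (p * (m0 - u0) - q * (m1 - u1)) * (A - E)"
    by (simp add: algebra_simps)
  show ?thesis unfolding a0 a1 by (rule r)
qed

definition bdd_on :: "'a set \<Rightarrow> ('a \<Rightarrow> real) \<Rightarrow> bool" where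
  "bdd_on S q \<longleftrightarrow> (\<exists>B. \<forall>z\<in>S. \<bar>q z\<bar> \<le> B)"

lemma bdd_on_const: "bdd_on S (\<lambda>_. c)"
  unfolding bdd_on_def by auto

lemma bdd_on_bound: "(\<And>z. z \<in> S \<Longrightarrow> \<bar>q z\<bar> \<le> B) \<Longrightarrow> bdd_on S q"
  unfolding bdd_on_def by auto

lemma bdd_on_add: "bdd_on S p \<Longrightarrow> bdd_on S q \<Longrightarrow> bdd_on S (\<lambda>z. p z + q z)"
proof -
  assume "bdd_on S p" "bdd_on S q"
  then obtain B1 B2 where b1: "\<forall>z\<in>S. \<bar>p z\<bar> \<le> B1" and b2: "\<forall>z\<in>S. \<bar>q z\<bar> \<le> B2"
    unfolding bdd_on_def by auto
  show ?thesis unfolding bdd_on_def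
  proof (intro exI ballI)
    fix z assume z: "z \<in> S"
    show "\<bar>p z + q z\<bar> \<le> B1 + B2" using b1 b2 z by (smt (verit) abs_triangle_ineq)
  qed
qed

lemma bdd_on_diff: "bdd_on S p \<Longrightarrow> bdd_on S q \<Longrightarrow> bdd_on S (\<lambda>z. p z - q z)"
proof -
  assume "bdd_on S p" "bdd_on S q"
  then obtain B1 B2 where b1: "\<forall>z\<in>S. \<bar>p z\<bar> \<le> B1" and b2: "\<forall>z\<in>S. \<bar>q z\<bar> \<le> B2"
    unfolding bdd_on_def by auto
  show ?thesis unfolding bdd_on_def
  proof (intro exI ballI)
    fix z assume z: "z \<in> S"
    show "\<bar>p z - q z\<bar> \<le> B1 + B2" using b1 b2 z by (smt (verit) abs_triangle_ineq4)
  qed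
qed

lemma bdd_on_mult: "bdd_on S p \<Longrightarrow> bdd_on S q \<Longrightarrow> bdd_on S (\<lambda>z. p z * q z)"
proof -
  assume "bdd_on S p" "bdd_on S q"
  then obtain B1 B2 where b1: "\<forall>z\<in>S. \<bar>p z\<bar> \<le> B1" and b2: "\<forall>z\<in>S. \<bar>q z\<bar> \<le> B2"
    unfolding bdd_on_def by auto
  show ?thesis unfolding bdd_on_def
  proof (intro exI ballI)
    fix z assume z: "z \<in> S"
    have "\<bar>p z * q z\<bar> = \<bar>p z\<bar> * \<bar>q z\<bar>" by (simp add: abs_mult)
    also have "\<dots> \<le> B1 * B2"
      using b1 b2 z by (intro mult_mono) (auto intro: order_trans[OF abs_ge_zero])
    finally show "\<bar>p z * q z\<bar> \<le> B1 * B2" .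
  qed
qed

lemma bdd_on_sum: "finite I \<Longrightarrow> (\<And>i. i \<in> I \<Longrightarrow> bdd_on S (q i)) \<Longrightarrow> bdd_on S (\<lambda>z. \<Sum>i\<in>I. q i z)"
  by (induction I rule: finite_induct) (auto intro: bdd_on_add bdd_on_const)

lemma bdd_on_min0: "bdd_on S q \<Longrightarrow> bdd_on S (\<lambda>z. min 0 (q z))"
proof -
  assume "bdd_on S q"
  then obtain B where b: "\<forall>z\<in>S. \<bar>q z\<bar> \<le> B" unfolding bdd_on_def by auto
  show ?thesis unfolding bdd_on_def
  proof (intro exI ballI)
    fix z assume z: "z \<in> S"
    show "\<bar>min 0 (q z)\<bar> \<le> B" using b z by (smt (verit))
  qed
qed

lemma bdd_on_of_bool: "bdd_on S (\<lambda>z. of_bool (b z))"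
  by (rule bdd_on_bound[where B=1]) auto

lemma bdd_on_inv: "0 < c \<Longrightarrow> (\<And>z. z \<in> S \<Longrightarrow> c \<le> \<bar>q z\<bar>) \<Longrightarrow> bdd_on S (\<lambda>z. 1 / q z)"
proof (rule bdd_on_bound[where B="1/c"])
  fix z assume c: "0 < c" and h: "\<And>z. z \<in> S \<Longrightarrow> c \<le> \<bar>q z\<bar>" and z: "z \<in> S"
  have "c \<le> \<bar>q z\<bar>" using h z by auto
  then show "\<bar>1 / q z\<bar> \<le> 1 / c" using c by (simp add: frac_le)
qed

lemma bdd_on_fst: "bdd_on T w \<Longrightarrow> (\<And>z. z \<in> S \<Longrightarrow> fst z \<in> T) \<Longrightarrow> bdd_on S (\<lambda>z. w (fst z))"
  unfolding bdd_on_def by fast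

lemma bdd_integrable: "finite_measure P \<Longrightarrow> q \<in> borel_measurable P \<Longrightarrow> bdd_on (space P) q \<Longrightarrow> integrable P q"
  unfolding bdd_on_def
  by (metis AE_I2 finite_measure.integrable_const_bound real_norm_def)

theorem lemma5:
  fixes P :: "('x \<times> bool \<times> bool) measure"
    and MX :: "'x measure"
    and e :: "'x \<Rightarrow> real" and mu :: "'x \<Rightarrow> bool \<Rightarrow> real"
    and ebar :: real and m :: nat and rho :: "nat \<Rightarrow> real"
    and g :: "nat \<Rightarrow> nat \<Rightarrow> 'x \<Rightarrow> real"
    and et :: "'x \<Rightarrow> real" and mut :: "'x \<Rightarrow> bool \<Rightarrow> real"
    and etat :: "nat \<Rightarrow> 'x \<Rightarrow> real"
  assumes P: "prob_space P"
    and sets_P: "sets P = sets (MX \<Otimes>\<^sub>M (count_space UNIV \<Otimes>\<^sub>M count_space UNIV))"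
    and ebar: "0 < ebar"
    (* e(x) = P(A = 1 | X = x) *)
    and e_meas: "e \<in> borel_measurable MX"
    and e_bnd: "\<And>x. x \<in> space MX \<Longrightarrow> ebar \<le> e x \<and> e x \<le> 1 - ebar"
    and e_ce: "\<And>B. B \<in> sets MX \<Longrightarrow>
        (\<integral>(x, a, y). indicator B x * of_bool a \<partial>P) = (\<integral>(x, a, y). indicator B x * e x \<partial>P)"
    (* mu(x,a) = E[Y | X = x, A = a] *)
    and mu_meas: "\<And>a0. (\<lambda>x. mu x a0) \<in> borel_measurable MX"
    and mu_bnd: "\<And>x a0. x \<in> space MX \<Longrightarrow> 0 \<le> mu x a0 \<and> mu x a0 \<le> 1"
    and mu_ce: "\<And>B a0. B \<in> sets MX \<Longrightarrow>
        (\<integral>(x, a, y). indicator B x * of_bool (a = a0) * of_bool y \<partial>P)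
          = (\<integral>(x, a, y). indicator B x * of_bool (a = a0) * mu x a0 \<partial>P)"
    (* rho \<in> {-1,+1}^m, g_l measurable into [-1,1]^3 *)
    and rho: "\<And>l. l \<in> {1..m} \<Longrightarrow> rho l = 1 \<or> rho l = -1"
    and g_meas: "\<And>l c. l \<le> m \<Longrightarrow> c \<le> 2 \<Longrightarrow> g l c \<in> borel_measurable MX"
    and g_bnd: "\<And>l c x. l \<le> m \<Longrightarrow> c \<le> 2 \<Longrightarrow> x \<in> space MX \<Longrightarrow> \<bar>g l c x\<bar> \<le> 1"
    (* nuisance estimates *)
    and mut_meas: "\<And>a0. (\<lambda>x. mut x a0) \<in> borel_measurable MX"
    and mut_bnd: "\<And>x a0. x \<in> space MX \<Longrightarrow> 0 \<le> mut x a0 \<and> mut x a0 \<le> 1"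
    and et_meas: "et \<in> borel_measurable MX"
    and et_bnd: "\<And>x. x \<in> space MX \<Longrightarrow> ebar \<le> et x \<and> et x \<le> 1 - ebar"
    and etat_meas: "\<And>l. l \<in> {1..m} \<Longrightarrow> etat l \<in> borel_measurable MX"
    and dr: "mut = mu \<or> et = e"
  shows "((\<forall>l\<in>{1..m}. etat l = eta g mu l) \<longrightarrow>
            (\<integral>z. phi m rho g et mut etat z \<partial>P) = AHE P m rho g mu)
       \<and> ((\<forall>l\<in>{1..m}. etat l \<noteq> eta g mu l \<longrightarrow> rho l = 1) \<longrightarrow>
            (\<integral>z. phi m rho g et mut etat z \<partial>P) \<ge> AHE P m rho g mu)
       \<and> ((\<forall>l\<in>{1..m}. etat l \<noteq> eta g mu l \<longrightarrow> rho l = -1) \<longrightarrow>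
            (\<integral>z. phi m rho g et mut etat z \<partial>P) \<le> AHE P m rho g mu)"
proof -
  interpret prob_space P by (rule P)
  have fmP: "finite_measure P" by unfold_locales
  have spP: "space P = space MX \<times> UNIV \<times> UNIV"
    using sets_eq_imp_space_eq[OF sets_P] by (simp add: space_pair_measure)
  have sp: "\<And>z. z \<in> space P \<Longrightarrow> fst z \<in> space MX" using spP by auto
  have mP: "\<And>N. measurable P N = measurable (MX \<Otimes>\<^sub>M (count_space UNIV \<Otimes>\<^sub>M count_space UNIV)) N"
    by (rule measurable_cong_sets[OF sets_P refl])
  have Xm: "fst \<in> measurable P MX" unfolding mP by measurable
  have Am: "(\<lambda>z. of_bool (fst (snd z) = a0) :: real) \<in> borel_measurable P" for a0
    unfolding mP by measurable
  have Am1: "(\<lambda>z. of_bool (fst (snd z)) :: real) \<in> borel_measurable P"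
    unfolding mP by measurable
  have Ym: "(\<lambda>z. of_bool (snd (snd z)) :: real) \<in> borel_measurable P"
    unfolding mP by measurable
  have compm: "\<And>w. w \<in> borel_measurable MX \<Longrightarrow> (\<lambda>z. w (fst z)) \<in> borel_measurable P"
    using Xm by (rule measurable_compose)
  have compb: "\<And>w. bdd_on (space MX) w \<Longrightarrow> bdd_on (space P) (\<lambda>z. w (fst z))"
    by (erule bdd_on_fst) (rule sp)
  have gb: "bdd_on (space MX) (g l c)" if "l \<le> m" "c \<le> 2" for l c
    using g_bnd[OF that] by (rule bdd_on_bound)
  have mub: "bdd_on (space MX) (\<lambda>x. mu x a0)" for a0
    using mu_bnd by (intro bdd_on_bound[where B=1]) auto
  have mutb: "bdd_on (space MX) (\<lambda>x. mut x a0)" for a0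
    using mut_bnd by (intro bdd_on_bound[where B=1]) auto
  have eb: "bdd_on (space MX) e"
    using e_bnd ebar by (intro bdd_on_bound[where B=1]) fastforce
  define Z where "Z c = zeta m rho g etat c" for c
  have Zm: "Z c \<in> borel_measurable MX" if "c \<le> 2" for c
  proof -
    have "(\<lambda>x. rho l * of_bool (etat l x \<le> 0) * g l c x) \<in> borel_measurable MX" if l: "l \<in> {1..m}" for l
    proof -
      have [measurable]: "etat l \<in> borel_measurable MX" using etat_meas l by auto
      have [measurable]: "g l c \<in> borel_measurable MX" using g_meas l \<open>c \<le> 2\<close> by auto
      show ?thesis by measurable
    qed
    moreover have "g 0 c \<in> borel_measurable MX" using g_meas \<open>c \<le> 2\<close> by auto
    ultimately show ?thesis unfolding Z_def zeta_def
      by (intro borel_measurable_add borel_measurable_sum) auto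
  qed
  have Zb: "bdd_on (space MX) (Z c)" if "c \<le> 2" for c
  proof -
    have "bdd_on (space MX) (\<lambda>x. rho l * of_bool (etat l x \<le> 0) * g l c x)" if l: "l \<in> {1..m}" for l
      using l \<open>c \<le> 2\<close> by (intro bdd_on_mult bdd_on_const bdd_on_of_bool gb) auto
    then show ?thesis unfolding Z_def zeta_def
      by (intro bdd_on_add gb bdd_on_sum) (use \<open>c \<le> 2\<close> in auto)
  qed
  define h0 where "h0 x = Z 0 x / (1 - et x)" for x
  define h1 where "h1 x = Z 1 x / et x" for x
  have h0m: "h0 \<in> borel_measurable MX" unfolding h0_def
    using Zm[of 0] et_meas by measurable
  have h1m: "h1 \<in> borel_measurable MX" unfolding h1_def
    using Zm[of 1] et_meas by measurable
  have h0b: "bdd_on (space MX) h0"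
  proof -
    have "bdd_on (space MX) (\<lambda>x. Z 0 x * (1 / (1 - et x)))"
      using et_bnd ebar by (intro bdd_on_mult Zb bdd_on_inv[where c=ebar]) fastforce+
    then show ?thesis unfolding h0_def by simp
  qed
  have h1b: "bdd_on (space MX) h1"
  proof -
    have "bdd_on (space MX) (\<lambda>x. Z 1 x * (1 / et x))"
      using et_bnd ebar by (intro bdd_on_mult Zb bdd_on_inv[where c=ebar]) fastforce+
    then show ?thesis unfolding h1_def by simp
  qed
  have Zmu: "(\<integral>z. w (fst z) * (of_bool (fst (snd z) = a0) * (of_bool (snd (snd z)) - mu (fst z) a0)) \<partial>P) = 0"
    if wm: "w \<in> borel_measurable MX" and wb: "bdd_on (space MX) w" for w a0
  proof -
    define f where "f z = (of_bool (fst (snd z) = a0) * of_bool (snd (snd z)) :: real)" for z :: "'x \<times> bool \<times> bool"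
    define k where "k z = (of_bool (fst (snd z) = a0) * mu (fst z) a0 :: real)" for z :: "'x \<times> bool \<times> bool"
    have fm: "f \<in> borel_measurable P" unfolding f_def using Am Ym by (rule borel_measurable_times)
    have km: "k \<in> borel_measurable P" unfolding k_def
      using Am compm[OF mu_meas] by (rule borel_measurable_times)
    have fb: "0 \<le> f z \<and> f z \<le> 1" for z unfolding f_def by auto
    have kb: "0 \<le> k z \<and> k z \<le> 1" if "z \<in> space P" for z
      unfolding k_def using mu_bnd[OF sp[OF that]] by auto
    have "(\<integral>z. w (fst z) * f z \<partial>P) = (\<integral>z. w (fst z) * k z \<partial>P)"
    proof (rule ce_ext[OF fmP Xm fm km _ _ _ wm])
      fix B assume B: "B \<in> sets MX"
      have e1: "(\<lambda>(x, a, y). indicator B x * of_bool (a = a0) * of_bool y) = (\<lambda>z. indicator B (fst z) * f z :: real)"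
        by (auto simp: f_def fun_eq_iff)
      have e2: "(\<lambda>(x, a, y). indicator B x * of_bool (a = a0) * mu x a0) = (\<lambda>z. indicator B (fst z) * k z :: real)"
        by (auto simp: k_def fun_eq_iff)
      show "(\<integral>z. indicator B (fst z) * f z \<partial>P) = (\<integral>z. indicator B (fst z) * k z \<partial>P)"
        using mu_ce[OF B, of a0] unfolding e1 e2 .
    qed (use fb kb in auto)
    moreover have "integrable P (\<lambda>z. w (fst z) * f z)"
      by (intro bdd_integrable[OF fmP] borel_measurable_times compm wm fm bdd_on_mult compb wb)
         (auto simp: f_def intro: bdd_on_mult bdd_on_of_bool)
    moreover have "integrable P (\<lambda>z. w (fst z) * k z)"
      by (intro bdd_integrable[OF fmP] borel_measurable_times compm wm km bdd_on_mult compb wb)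
         (auto simp: k_def intro!: bdd_on_mult bdd_on_of_bool compb mub)
    ultimately have "(\<integral>z. w (fst z) * f z - w (fst z) * k z \<partial>P) = 0" by simp
    then show ?thesis by (simp add: f_def k_def algebra_simps)
  qed
  have Ze: "(\<integral>z. w (fst z) * (of_bool (fst (snd z)) - e (fst z)) \<partial>P) = 0"
    if wm: "w \<in> borel_measurable MX" and wb: "bdd_on (space MX) w" for w
  proof -
    define f where "f z = (of_bool (fst (snd z)) :: real)" for z :: "'x \<times> bool \<times> bool"
    define k where "k z = e (fst z)" for z :: "'x \<times> bool \<times> bool"
    have fm: "f \<in> borel_measurable P" unfolding f_def using Am1 .
    have km: "k \<in> borel_measurable P" unfolding k_def using compm[OF e_meas] .
    have fb: "0 \<le> f z \<and> f z \<le> 1" for z unfolding f_def by auto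
    have kb: "0 \<le> k z \<and> k z \<le> 1" if "z \<in> space P" for z
      unfolding k_def using e_bnd[OF sp[OF that]] ebar by auto
    have "(\<integral>z. w (fst z) * f z \<partial>P) = (\<integral>z. w (fst z) * k z \<partial>P)"
    proof (rule ce_ext[OF fmP Xm fm km _ _ _ wm])
      fix B assume B: "B \<in> sets MX"
      have e1: "(\<lambda>(x, a, y). indicator B x * of_bool a) = (\<lambda>z. indicator B (fst z) * f z :: real)"
        by (auto simp: f_def fun_eq_iff)
      have e2: "(\<lambda>(x, a, y). indicator B x * e x) = (\<lambda>z. indicator B (fst z) * k z :: real)"
        by (auto simp: k_def fun_eq_iff)
      show "(\<integral>z. indicator B (fst z) * f z \<partial>P) = (\<integral>z. indicator B (fst z) * k z \<partial>P)"
        using e_ce[OF B] unfolding e1 e2 .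
    qed (use fb kb in auto)
    moreover have "integrable P (\<lambda>z. w (fst z) * f z)"
      by (intro bdd_integrable[OF fmP] borel_measurable_times compm wm fm bdd_on_mult compb wb)
         (auto simp: f_def intro: bdd_on_of_bool)
    moreover have "integrable P (\<lambda>z. w (fst z) * k z)"
      by (intro bdd_integrable[OF fmP] borel_measurable_times compm wm km bdd_on_mult compb wb)
         (auto simp: k_def intro!: compb eb)
    ultimately have "(\<integral>z. w (fst z) * f z - w (fst z) * k z \<partial>P) = 0" by simp
    then show ?thesis by (simp add: f_def k_def algebra_simps)
  qed
  define psi where "psi x = Z 2 x + Z 0 x * mu x False + Z 1 x * mu x True" for x
  define w3 where "w3 x = h0 x * (mut x False - mu x False) - h1 x * (mut x True - mu x True)" for x
  define t1 where "t1 z = h0 (fst z) * (of_bool (fst (snd z) = False) * (of_bool (snd (snd z)) - mu (fst z) False))"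
    for z :: "'x \<times> bool \<times> bool"
  define t2 where "t2 z = h1 (fst z) * (of_bool (fst (snd z) = True) * (of_bool (snd (snd z)) - mu (fst z) True))"
    for z :: "'x \<times> bool \<times> bool"
  define t3 where "t3 z = w3 (fst z) * (of_bool (fst (snd z)) - et (fst z))"
    for z :: "'x \<times> bool \<times> bool"
  have pw: "phi m rho g et mut etat z = psi (fst z) + t1 z + t2 z + t3 z" if z: "z \<in> space P" for z
  proof -
    obtain x a y where zx: "z = (x, a, y)" by (cases z) auto
    have x: "x \<in> space MX" using sp[OF z] zx by simp
    have n1: "et x \<noteq> 0" and n2: "1 - et x \<noteq> 0" using et_bnd[OF x] ebar by auto
    have "phi m rho g et mut etat (x, a, y) = Z 2 x + Z 0 x * (((of_bool a - et x) * mut x False + (1 - of_bool a) * of_bool y) / (1 - et x))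
     + Z 1 x * (((et x - of_bool a) * mut x True + of_bool a * of_bool y) / et x)"
      by (simp add: phi_def Z_def)
    also have "\<dots> = psi x + t1 (x, a, y) + t2 (x, a, y) + t3 (x, a, y)"
      unfolding psi_def t1_def t2_def t3_def w3_def h0_def h1_def fst_conv snd_conv
      using alg[OF n1 n2, of "Z 2 x" "Z 0 x" "of_bool a" "mut x False" "of_bool y" "Z 1 x" "mut x True" "mu x False" "mu x True"]
      by (cases a) simp_all
    finally show ?thesis unfolding zx by simp
  qed
  have mum: "(\<lambda>x. mu x a0) \<in> borel_measurable MX" for a0 using mu_meas .
  have mutm: "(\<lambda>x. mut x a0) \<in> borel_measurable MX" for a0 using mut_meas .
  have psim: "psi \<in> borel_measurable MX" unfolding psi_def
    by (intro borel_measurable_add borel_measurable_times Zm mum) auto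
  have psib: "bdd_on (space MX) psi" unfolding psi_def
    by (intro bdd_on_add bdd_on_mult Zb mub) auto
  have w3m: "w3 \<in> borel_measurable MX" unfolding w3_def
    by (intro borel_measurable_diff borel_measurable_times h0m h1m mum mutm)
  have w3b: "bdd_on (space MX) w3" unfolding w3_def
    by (intro bdd_on_diff bdd_on_mult h0b h1b mub mutb)
  have i0: "integrable P (\<lambda>z. psi (fst z))"
    by (intro bdd_integrable[OF fmP] compm psim compb psib)
  have i1: "integrable P t1" unfolding t1_def
    by (intro bdd_integrable[OF fmP] borel_measurable_times borel_measurable_diff compm h0m mum Am Ym
        bdd_on_mult bdd_on_diff compb h0b mub bdd_on_of_bool)
  have i2: "integrable P t2" unfolding t2_def
    by (intro bdd_integrable[OF fmP] borel_measurable_times borel_measurable_diff compm h1m mum Am Ym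
        bdd_on_mult bdd_on_diff compb h1b mub bdd_on_of_bool)
  have etb: "bdd_on (space MX) et"
    using et_bnd ebar by (intro bdd_on_bound[where B=1]) fastforce
  have i3: "integrable P t3" unfolding t3_def
    by (intro bdd_integrable[OF fmP] borel_measurable_times borel_measurable_diff compm w3m et_meas Am1
        bdd_on_mult bdd_on_diff compb w3b etb bdd_on_of_bool)
  have E1: "integral\<^sup>L P t1 = 0" unfolding t1_def using Zmu[OF h0m h0b, of False] .
  have E2: "integral\<^sup>L P t2 = 0" unfolding t2_def using Zmu[OF h1m h1b, of True] .
  have E3: "integral\<^sup>L P t3 = 0"
    using dr
  proof
    assume "mut = mu"
    then have "t3 = (\<lambda>z. 0)" by (auto simp: t3_def w3_def fun_eq_iff)
    then show ?thesis by simp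
  next
    assume "et = e"
    then show ?thesis unfolding t3_def using Ze[OF w3m w3b] by simp
  qed
  have "(\<integral>z. phi m rho g et mut etat z \<partial>P) = (\<integral>z. psi (fst z) + t1 z + t2 z + t3 z \<partial>P)"
    using pw by (intro Bochner_Integration.integral_cong) auto
  also have "\<dots> = (\<integral>z. psi (fst z) \<partial>P) + integral\<^sup>L P t1 + integral\<^sup>L P t2 + integral\<^sup>L P t3"
    using i0 i1 i2 i3 by simp
  finally have Ephi: "(\<integral>z. phi m rho g et mut etat z \<partial>P) = (\<integral>z. psi (fst z) \<partial>P)"
    using E1 E2 E3 by simp
  define G where "G x = g 0 0 x * mu x False + g 0 1 x * mu x True + g 0 2 x
       + (\<Sum>l=1..m. rho l * min 0 (eta g mu l x))" for x
  define H where "H x = g 0 0 x * mu x False + g 0 1 x * mu x True + g 0 2 x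
       + (\<Sum>l=1..m. rho l * (of_bool (etat l x \<le> 0) * eta g mu l x))" for x
  have psiH: "psi x = H x" for x
  proof -
    have "(\<Sum>l=1..m. rho l * (of_bool (etat l x \<le> 0) * eta g mu l x))
      = (\<Sum>l=1..m. rho l * of_bool (etat l x \<le> 0) * g l 0 x) * mu x False
      + (\<Sum>l=1..m. rho l * of_bool (etat l x \<le> 0) * g l 1 x) * mu x True
      + (\<Sum>l=1..m. rho l * of_bool (etat l x \<le> 0) * g l 2 x)"
    proof -
      have "\<And>l. rho l * (of_bool (etat l x \<le> 0) * eta g mu l x)
        = (rho l * of_bool (etat l x \<le> 0) * g l 0 x) * mu x False
        + (rho l * of_bool (etat l x \<le> 0) * g l 1 x) * mu x True
        + rho l * of_bool (etat l x \<le> 0) * g l 2 x"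
        by (simp add: eta_def algebra_simps)
      then show ?thesis by (simp only: sum.distrib sum_distrib_right)
    qed
    then show ?thesis by (simp add: psi_def H_def Z_def zeta_def algebra_simps)
  qed
  have AHEG: "AHE P m rho g mu = (\<integral>z. G (fst z) \<partial>P)"
  proof -
    have "(\<lambda>(x, a, y). g 0 0 x * mu x False + g 0 1 x * mu x True + g 0 2 x
       + (\<Sum>l=1..m. rho l * min 0 (eta g mu l x))) = (\<lambda>z. G (fst z))"
      (is "?l = ?r") by (auto simp: G_def fun_eq_iff)
    show ?thesis unfolding AHE_def \<open>?l = ?r\<close> by (rule refl)
  qed
  have Ephi2: "(\<integral>z. phi m rho g et mut etat z \<partial>P) = (\<integral>z. H (fst z) \<partial>P)"
    using Ephi psiH by simp
  have iH: "integrable P (\<lambda>z. H (fst z))" using i0 psiH by simp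
  have etam: "eta g mu l \<in> borel_measurable MX" if "l \<le> m" for l
    unfolding eta_def using that
    by (intro borel_measurable_add borel_measurable_times g_meas mum) auto
  have etab: "bdd_on (space MX) (eta g mu l)" if "l \<le> m" for l
    unfolding eta_def using that
    by (intro bdd_on_add bdd_on_mult gb mub) auto
  have Gm: "G \<in> borel_measurable MX" unfolding G_def
    by (intro borel_measurable_add borel_measurable_times borel_measurable_sum borel_measurable_min
        g_meas mum etam borel_measurable_const) auto
  have Gb: "bdd_on (space MX) G" unfolding G_def
    by (intro bdd_on_add bdd_on_mult bdd_on_sum bdd_on_min0 gb mub etab bdd_on_const) auto
  have iG: "integrable P (\<lambda>z. G (fst z))"
    by (intro bdd_integrable[OF fmP] compm Gm compb Gb)
  have term_ge: "rho l * (of_bool (etat l x \<le> 0) * eta g mu l x) \<ge> rho l * min 0 (eta g mu l x)"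
    if "etat l x = eta g mu l x \<or> rho l = 1" for l x
    using that by (cases "etat l x \<le> 0") auto
  have term_le: "rho l * (of_bool (etat l x \<le> 0) * eta g mu l x) \<le> rho l * min 0 (eta g mu l x)"
    if "etat l x = eta g mu l x \<or> rho l = -1" for l x
    using that by (cases "etat l x \<le> 0") auto
  show ?thesis
  proof (intro conjI impI)
    assume h: "\<forall>l\<in>{1..m}. etat l = eta g mu l"
    have "H x = G x" for x
      unfolding H_def G_def using h by (intro arg_cong2[where f="(+)"] refl sum.cong) auto
    then show "(\<integral>z. phi m rho g et mut etat z \<partial>P) = AHE P m rho g mu"
      unfolding Ephi2 AHEG by simp
  next
    assume h: "\<forall>l\<in>{1..m}. etat l \<noteq> eta g mu l \<longrightarrow> rho l = 1"
    have "G x \<le> H x" for x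
      unfolding H_def G_def using h by (intro add_left_mono sum_mono term_ge) (metis h)
    then show "(\<integral>z. phi m rho g et mut etat z \<partial>P) \<ge> AHE P m rho g mu"
      unfolding Ephi2 AHEG using iG iH by (intro integral_mono) auto
  next
    assume h: "\<forall>l\<in>{1..m}. etat l \<noteq> eta g mu l \<longrightarrow> rho l = -1"
    have "H x \<le> G x" for x
      unfolding H_def G_def using h by (intro add_left_mono sum_mono term_le) (metis h)
    then show "(\<integral>z. phi m rho g et mut etat z \<partial>P) \<le> AHE P m rho g mu"
      unfolding Ephi2 AHEG using iG iH by (intro integral_mono) auto
  qed
qed

end
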